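(* Let $d \geq 3$, let $C \subset \mathbb{R}^d$ be a smooth $d$-dimensional combinatorial cube with faces labeled $F_I^J$ via a fixed face-poset isomorphism with $[0,1]^d$, and fix $x,y \in \{1,\dots,d\}$ with $x \neq y$. Consider the four $(d-2)$-dimensional faces $F_{xy}, F_{x\bar y}, F_{\bar x y}, F_{\bar x \bar y}$. If three of them are parallel to each other, then the fourth is parallel to them as well.
   Context: A lattice polytope is the convex hull of finitely many points of $\mathbb{Z}^d$. A $d$-dimensional polytope is simple if each vertex lies in exactly $d$ edges; the primitive edge directions at a vertex are the smallest lattice vectors along its incident edges; a $d$-dimensional lattice polytope in $\mathbb{R}^d$ is smooth if it is simple and at every vertex the primitive edge directions form a basis of $\mathbb{Z}^d$. A $d$-dimensional combinatorial cube is a polytope $C$ whose face poset is isomorphic to that of $[0,1]^d$. For disjoint $I,J \subseteq \{1,\dots,d\}$ the face of $[0,1]^d$ given by $x_k=0$ for $k\in I$ and $x_k = 1$ for $k \in J$ is denoted $F_I^J$, and the corresponding face of $C$ is also denoted $F_I^J$. Elements of $J$ are written with a bar and elements of $I$ without, e.g. $F_{x\bar y} = F_{\{x\}}^{\{y\}}$, $F_{\bar x\bar y} = F_{\emptyset}^{\{x,y\}}$. Two faces $F,G$ are parallel if $\mathrm{lin}(F)=\mathrm{lin}(G)$, where $\mathrm{lin}(F)$ is the linear subspace parallel to the affine hull of $F$. *)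

theory Defs
  imports "HOL-Analysis.Analysis"
begin

text \<open>Points of \<real>^d are modelled as real^'n with d = CARD('n); coordinates are indexed by 'n.\<close>

definition integral_vec :: "real^'n \<Rightarrow> bool" where
  "integral_vec v \<longleftrightarrow> (\<forall>i. v $ i \<in> \<int>)"

definition lattice_polytope :: "(real^'n) set \<Rightarrow> bool" where
  "lattice_polytope P \<longleftrightarrow> (\<exists>S. finite S \<and> (\<forall>v\<in>S. integral_vec v) \<and> P = convex hull S)"

definition is_vertex :: "(real^'n) set \<Rightarrow> real^'n \<Rightarrow> bool" where
  "is_vertex P v \<longleftrightarrow> {v} face_of P"

definition is_edge :: "(real^'n) set \<Rightarrow> (real^'n) set \<Rightarrow> bool" where
  "is_edge P E \<longleftrightarrow> E face_of P \<and> aff_dim E = 1"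

definition simple_polytope :: "(real^'n) set \<Rightarrow> bool" where
  "simple_polytope P \<longleftrightarrow> polytope P \<and> aff_dim P = int CARD('n) \<and>
     (\<forall>v. is_vertex P v \<longrightarrow> card {E. is_edge P E \<and> v \<in> E} = CARD('n))"

definition primitive_edge_dir :: "real^'n \<Rightarrow> (real^'n) set \<Rightarrow> real^'n \<Rightarrow> bool" where
  "primitive_edge_dir v E u \<longleftrightarrow> u \<noteq> 0 \<and> integral_vec u \<and> (\<exists>t>0. v + t *\<^sub>R u \<in> E) \<and>
     (\<forall>c. 0 < c \<and> c < 1 \<longrightarrow> \<not> integral_vec (c *\<^sub>R u))"

definition primitive_edge_dirs :: "(real^'n) set \<Rightarrow> real^'n \<Rightarrow> (real^'n) set" where
  "primitive_edge_dirs P v = {u. \<exists>E. is_edge P E \<and> v \<in> E \<and> primitive_edge_dir v E u}"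

definition lattice_basis :: "(real^'n) set \<Rightarrow> bool" where
  "lattice_basis D \<longleftrightarrow> finite D \<and> card D = CARD('n) \<and> independent D \<and> (\<forall>u\<in>D. integral_vec u) \<and>
     (\<forall>z. integral_vec z \<longrightarrow> (\<exists>c::real^'n \<Rightarrow> int. z = (\<Sum>u\<in>D. of_int (c u) *\<^sub>R u)))"

definition smooth_polytope :: "(real^'n) set \<Rightarrow> bool" where
  "smooth_polytope P \<longleftrightarrow> lattice_polytope P \<and> simple_polytope P \<and>
     (\<forall>v. is_vertex P v \<longrightarrow> lattice_basis (primitive_edge_dirs P v))"

definition unit_cube :: "(real^'n) set" where
  "unit_cube = {x. \<forall>i. 0 \<le> x $ i \<and> x $ i \<le> 1}"

definition cube_face :: "'n set \<Rightarrow> 'n set \<Rightarrow> (real^'n) set" where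
  "cube_face I J = {x \<in> unit_cube. (\<forall>k\<in>I. x $ k = 0) \<and> (\<forall>k\<in>J. x $ k = 1)}"

definition face_poset_iso :: "((real^'n) set \<Rightarrow> (real^'n) set) \<Rightarrow> (real^'n) set \<Rightarrow> bool" where
  "face_poset_iso \<phi> P \<longleftrightarrow> bij_betw \<phi> {F. F face_of unit_cube} {F. F face_of P} \<and>
     (\<forall>F G. F face_of unit_cube \<longrightarrow> G face_of unit_cube \<longrightarrow> (\<phi> F \<subseteq> \<phi> G \<longleftrightarrow> F \<subseteq> G))"

definition combinatorial_cube :: "(real^'n) set \<Rightarrow> bool" where
  "combinatorial_cube P \<longleftrightarrow> polytope P \<and> (\<exists>\<phi>. face_poset_iso \<phi> P)"

definition lin_face :: "(real^'n) set \<Rightarrow> (real^'n) set" where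
  "lin_face F = span {a - b | a b. a \<in> F \<and> b \<in> F}"

definition parallel_faces :: "(real^'n) set \<Rightarrow> (real^'n) set \<Rightarrow> bool" where
  "parallel_faces F G \<longleftrightarrow> lin_face F = lin_face G"

end

theory Submission
  imports Defs
begin

lemma lin_face_eq:
  fixes S :: "(real^'n) set"
  assumes "a \<in> S"
  shows "lin_face S = span ((\<lambda>x. -a + x) ` S)"
proof
  show "lin_face S \<subseteq> span ((\<lambda>x. -a + x) ` S)"
    unfolding lin_face_def
  proof (rule span_minimal)
    show "{u - v |u v. u \<in> S \<and> v \<in> S} \<subseteq> span ((\<lambda>x. - a + x) ` S)"
    proof
      fix w assume "w \<in> {u - v |u v. u \<in> S \<and> v \<in> S}"
      then obtain u v where w: "w = u - v" "u \<in> S" "v \<in> S" by blast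
      have "-a + u \<in> span ((\<lambda>x. - a + x) ` S)" "-a + v \<in> span ((\<lambda>x. - a + x) ` S)"
        using w by (auto intro: span_base)
      then have "(-a + u) - (-a + v) \<in> span ((\<lambda>x. - a + x) ` S)" by (rule span_diff)
      then show "w \<in> span ((\<lambda>x. - a + x) ` S)" using w by simp
    qed
  qed (rule subspace_span)
next
  show "span ((\<lambda>x. -a + x) ` S) \<subseteq> lin_face S"
    unfolding lin_face_def
  proof (rule span_mono)
    show "(\<lambda>x. - a + x) ` S \<subseteq> {u - v |u v. u \<in> S \<and> v \<in> S}"
      using assms by force
  qed
qed

lemma aff_dim_lin:
  fixes S :: "(real^'n) set"
  assumes "a \<in> S"
  shows "aff_dim S = int (dim (lin_face S))"
  using aff_dim_eq_dim[of a S] assms lin_face_eq[OF assms] by (simp add: hull_inc)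

lemma aff_hull_lin:
  fixes S :: "(real^'n) set"
  assumes "a \<in> S"
  shows "affine hull S = (\<lambda>x. a + x) ` lin_face S"
  using affine_hull_span_gen[of a S] assms lin_face_eq[OF assms] by (simp add: hull_inc)

lemma lin_face_mono: "F \<subseteq> G \<Longrightarrow> lin_face F \<subseteq> lin_face G"
  unfolding lin_face_def by (rule span_mono) blast

lemma subspace_lin_face: "subspace (lin_face F)"
  unfolding lin_face_def by (rule subspace_span)

lemma key:
  fixes C A B G1 G2 G :: "(real^'n) set"
  assumes C: "convex C" and A: "A face_of C" and B: "B face_of C" and AB: "A \<noteq> B"
    and dA: "aff_dim A \<le> int CARD('n) - 1" and dB: "aff_dim B \<le> int CARD('n) - 1"
    and G1: "G1 \<subseteq> A" "G1 \<noteq> {}" "aff_dim G1 \<ge> int CARD('n) - 2"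
    and G2: "G2 \<subseteq> B"
    and G: "G \<subseteq> A" "G \<subseteq> B" "G \<noteq> {}" "aff_dim G \<ge> int CARD('n) - 2"
    and eq: "lin_face G1 = lin_face G2"
  shows "lin_face G = lin_face G1"
proof -
  define L where "L = lin_face G1"
  define LA where "LA = lin_face A"
  define LB where "LB = lin_face B"
  obtain g where g: "g \<in> G" using G by blast
  obtain g1 where g1: "g1 \<in> G1" using G1 by blast
  have LLA: "L \<subseteq> LA" unfolding L_def LA_def using G1(1) by (rule lin_face_mono)
  have LLB: "L \<subseteq> LB" unfolding L_def LB_def eq using G2 by (rule lin_face_mono)
  have LGA: "lin_face G \<subseteq> LA \<inter> LB" unfolding LA_def LB_def using G lin_face_mono by blast
  have dimA: "int (dim LA) \<le> int CARD('n) - 1"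
    using dA aff_dim_lin[of g A] g G unfolding LA_def by auto
  have dimB: "int (dim LB) \<le> int CARD('n) - 1"
    using dB aff_dim_lin[of g B] g G unfolding LB_def by auto
  have dimL: "int (dim L) \<ge> int CARD('n) - 2"
    using G1 aff_dim_lin[of g1 G1] g1 unfolding L_def by auto
  have dimG: "int (dim (lin_face G)) \<ge> int CARD('n) - 2"
    using G aff_dim_lin[of g G] g by auto
  have sA: "subspace LA" "subspace LB" "subspace L" "subspace (LA \<inter> LB)" "subspace (lin_face G)"
    unfolding LA_def LB_def L_def by (auto simp: subspace_lin_face intro!: subspace_inter)
  have neq: "LA \<noteq> LB"
  proof
    assume "LA = LB"
    moreover have "g \<in> A" "g \<in> B" using g G by auto
    ultimately have "affine hull A = affine hull B"
      using aff_hull_lin[of g A] aff_hull_lin[of g B] unfolding LA_def LB_def by simp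
    then show False
      using face_of_imp_eq_affine_Int[OF C A] face_of_imp_eq_affine_Int[OF C B] AB by auto
  qed
  have dimI: "int (dim (LA \<inter> LB)) \<le> int CARD('n) - 2"
  proof (rule ccontr)
    assume "\<not> ?thesis"
    then have "dim LA \<le> dim (LA \<inter> LB)" "dim LB \<le> dim (LA \<inter> LB)" using dimA dimB by auto
    then have "LA \<inter> LB = LA" "LA \<inter> LB = LB"
      using subspace_dim_equal[of "LA \<inter> LB" LA] subspace_dim_equal[of "LA \<inter> LB" LB] sA by auto
    then show False using neq by auto
  qed
  have "L = LA \<inter> LB"
    using subspace_dim_equal[of L "LA \<inter> LB"] sA LLA LLB dimI dimL by auto
  moreover have "lin_face G = LA \<inter> LB"
    using subspace_dim_equal[of "lin_face G" "LA \<inter> LB"] sA LGA dimI dimG by auto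
  ultimately show ?thesis unfolding L_def by simp
qed


definition vtx :: "'n set \<Rightarrow> real^'n" where "vtx J = (\<chi> i. if i \<in> J then 1 else 0)"

lemma vtx_in: "vtx J \<in> cube_face I J \<longleftrightarrow> I \<inter> J = {}"
  unfolding cube_face_def unit_cube_def vtx_def by auto

lemma vtx_cube: "vtx J \<in> unit_cube"
  unfolding unit_cube_def vtx_def by auto

lemma cube_face_mono: "I' \<subseteq> I \<Longrightarrow> J' \<subseteq> J \<Longrightarrow> cube_face I J \<subseteq> cube_face I' J'"
  unfolding cube_face_def by auto

lemma cube_face_face: "cube_face (I::'n::finite set) J face_of unit_cube"
  unfolding face_of_def
proof (intro conjI ballI impI)
  show "cube_face I J \<subseteq> unit_cube" unfolding cube_face_def by auto
  show "convex (cube_face I J)"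
  proof (rule convexI)
    fix a b :: "real^'n" and u v :: real
    assume A: "a \<in> cube_face I J" and B: "b \<in> cube_face I J" and uv: "0 \<le> u" "0 \<le> v" "u + v = 1"
    have a: "\<forall>i. 0 \<le> a $ i \<and> a $ i \<le> 1" "\<forall>k\<in>I. a $ k = 0" "\<forall>k\<in>J. a $ k = 1"
      using A unfolding cube_face_def unit_cube_def by auto
    have b: "\<forall>i. 0 \<le> b $ i \<and> b $ i \<le> 1" "\<forall>k\<in>I. b $ k = 0" "\<forall>k\<in>J. b $ k = 1"
      using B unfolding cube_face_def unit_cube_def by auto
    have "(\<forall>i. 0 \<le> u * a $ i + v * b $ i \<and> u * a $ i + v * b $ i \<le> 1) \<and>
          (\<forall>k\<in>I. u * a $ k + v * b $ k = 0) \<and> (\<forall>k\<in>J. u * a $ k + v * b $ k = 1)"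
    proof (intro conjI allI ballI)
      fix i
      show "0 \<le> u * a $ i + v * b $ i" using a b uv by simp
      have "u * a $ i \<le> u" "v * b $ i \<le> v" using a b uv by (simp_all add: mult_left_le)
      then show "u * a $ i + v * b $ i \<le> 1" using uv by linarith
    next
      fix k assume "k \<in> I" then show "u * a $ k + v * b $ k = 0" using a b by simp
    next
      fix k assume "k \<in> J" then show "u * a $ k + v * b $ k = 1" using a b uv by simp
    qed
    then show "u *\<^sub>R a + v *\<^sub>R b \<in> cube_face I J" unfolding cube_face_def unit_cube_def by simp
  qed
next
  fix a b x assume ab: "a \<in> unit_cube" "b \<in> unit_cube" and x: "x \<in> cube_face I J"
    and seg: "x \<in> open_segment a b"
  obtain u where u: "0 < u" "u < 1" "x = (1 - u) *\<^sub>R a + u *\<^sub>R b" using seg by (auto simp: in_segment)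
  have comp: "x $ k = (1 - u) * a $ k + u * b $ k" for k using u by simp
  have bnd: "0 \<le> a $ k" "a $ k \<le> 1" "0 \<le> b $ k" "b $ k \<le> 1" for k
    using ab unfolding unit_cube_def by auto
  have z: "a $ k = 0 \<and> b $ k = 0" if "k \<in> I" for k
  proof -
    have "(1 - u) * a $ k + u * b $ k = 0" using x that comp[of k] unfolding cube_face_def by auto
    moreover have "(1 - u) * a $ k \<ge> 0" "u * b $ k \<ge> 0" using u bnd[of k] by auto
    ultimately have "(1 - u) * a $ k = 0" "u * b $ k = 0" by linarith+
    then show ?thesis using u by auto
  qed
  have o: "a $ k = 1 \<and> b $ k = 1" if "k \<in> J" for k
  proof -
    have "(1 - u) * (1 - a $ k) + u * (1 - b $ k) = 0"
      using x that comp[of k] unfolding cube_face_def by (auto simp: algebra_simps)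
    moreover have "(1 - u) * (1 - a $ k) \<ge> 0" "u * (1 - b $ k) \<ge> 0" using u bnd[of k] by auto
    ultimately have "(1 - u) * (1 - a $ k) = 0" "u * (1 - b $ k) = 0" by linarith+
    then show ?thesis using u by auto
  qed
  show "a \<in> cube_face I J" using ab z o unfolding cube_face_def by auto
  show "b \<in> cube_face I J" using ab z o unfolding cube_face_def by auto
qed

lemma iso_props:
  assumes "face_poset_iso \<phi> C"
  shows "\<And>F. F face_of unit_cube \<Longrightarrow> \<phi> F face_of C"
    and "\<And>F G. F face_of unit_cube \<Longrightarrow> G face_of unit_cube \<Longrightarrow> \<phi> F \<subseteq> \<phi> G \<longleftrightarrow> F \<subseteq> G"
    and "\<And>F G. F face_of unit_cube \<Longrightarrow> G face_of unit_cube \<Longrightarrow> \<phi> F = \<phi> G \<longleftrightarrow> F = G"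
    and "\<phi> {} = {}"
proof -
  show f: "\<And>F. F face_of unit_cube \<Longrightarrow> \<phi> F face_of C"
    using assms unfolding face_poset_iso_def bij_betw_def by auto
  show s: "\<And>F G. F face_of unit_cube \<Longrightarrow> G face_of unit_cube \<Longrightarrow> \<phi> F \<subseteq> \<phi> G \<longleftrightarrow> F \<subseteq> G"
    using assms unfolding face_poset_iso_def by blast
  then show "\<And>F G. F face_of unit_cube \<Longrightarrow> G face_of unit_cube \<Longrightarrow> \<phi> F = \<phi> G \<longleftrightarrow> F = G"
    by (metis subset_antisym order_refl)
  have "{} \<in> \<phi> ` {F. F face_of unit_cube}"
    using assms unfolding face_poset_iso_def bij_betw_def by auto
  then obtain F0 where F0: "F0 face_of unit_cube" "\<phi> F0 = {}" by auto
  have "\<phi> {} \<subseteq> \<phi> F0" using s[of "{}" F0] F0 by auto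
  then show "\<phi> {} = {}" using F0 by auto
qed

lemma dim_lower:
  fixes C :: "(real^'n) set"
  assumes iso: "face_poset_iso \<phi> C"
  shows "I \<inter> J = {} \<Longrightarrow> card (UNIV - (I \<union> J)) = m \<Longrightarrow> aff_dim (\<phi> (cube_face I J)) \<ge> int m"
proof (induction m arbitrary: I)
  case 0
  then have "vtx J \<in> cube_face I J" by (simp add: vtx_in)
  then have "cube_face I J \<noteq> {}" by auto
  then have "\<phi> (cube_face I J) \<noteq> {}"
    using iso_props(3)[OF iso, of "cube_face I J" "{}"] iso_props(4)[OF iso] cube_face_face empty_face_of by metis
  then show ?case using aff_dim_empty[of "\<phi> (cube_face I J)"] aff_dim_geq[of "\<phi> (cube_face I J)"] by auto
next
  case (Suc m)
  then have "UNIV - (I \<union> J) \<noteq> {}" by (metis card.empty nat.distinct(1))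
  then obtain k where k: "k \<notin> I" "k \<notin> J" by blast
  then have d: "insert k I \<inter> J = {}" using Suc by auto
  have "UNIV - (insert k I \<union> J) = (UNIV - (I \<union> J)) - {k}" by auto
  then have c: "card (UNIV - (insert k I \<union> J)) = m" using Suc k by simp
  have IH: "aff_dim (\<phi> (cube_face (insert k I) J)) \<ge> int m" using Suc.IH[OF d c] .
  let ?Q = "cube_face I J" and ?Q' = "cube_face (insert k I) J"
  have sub: "?Q' \<subseteq> ?Q" by (rule cube_face_mono) auto
  have ne: "?Q' \<noteq> ?Q"
  proof
    assume "?Q' = ?Q"
    moreover have "vtx (insert k J) \<in> ?Q" using Suc k unfolding vtx_def cube_face_def unit_cube_def by auto
    moreover have "vtx (insert k J) \<notin> ?Q'" unfolding vtx_def cube_face_def by auto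
    ultimately show False by simp
  qed
  have f: "\<phi> ?Q face_of C" "\<phi> ?Q' face_of C" using iso_props(1)[OF iso] cube_face_face by auto
  have s: "\<phi> ?Q' \<subseteq> \<phi> ?Q" using iso_props(2)[OF iso] cube_face_face sub by blast
  have n: "\<phi> ?Q' \<noteq> \<phi> ?Q" using iso_props(3)[OF iso] cube_face_face ne by blast
  have "\<phi> ?Q' face_of \<phi> ?Q" using face_of_subset[OF f(2) s face_of_imp_subset[OF f(1)]] .
  then have "aff_dim (\<phi> ?Q') < aff_dim (\<phi> ?Q)"
    using face_of_aff_dim_lt[OF face_of_imp_convex[OF f(1)]] n by blast
  then show ?case using IH by linarith
qed


lemma vtx_mem: "vtx K \<in> cube_face I J \<longleftrightarrow> I \<inter> K = {} \<and> J \<subseteq> K"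
  unfolding cube_face_def unit_cube_def vtx_def by auto

lemma cf_neq: "p \<in> X \<Longrightarrow> p \<notin> Y \<Longrightarrow> X \<noteq> Y" by auto

lemma cube_face_empty: "cube_face {} {} = unit_cube"
  unfolding cube_face_def by simp

lemma card2:
  fixes x y :: "'n::finite"
  assumes "x \<noteq> y" "I \<union> J = {x, y}"
  shows "int (card (UNIV - (I \<union> J))) = int CARD('n) - 2"
proof -
  have "card (UNIV - {x, y}) = CARD('n) - 2"
    using card_Diff_subset[of "{x,y}" UNIV] assms by simp
  moreover have "CARD('n) \<ge> 2"
    using card_mono[of UNIV "{x,y}"] assms by simp
  ultimately show ?thesis using assms by simp
qed

lemma key2:
  fixes C :: "(real^'n) set"
  assumes iso: "face_poset_iso \<phi> C" and C: "convex C" and dC: "aff_dim C = int CARD('n)"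
    and nA: "cube_face IA JA \<noteq> unit_cube" and nB: "cube_face IB JB \<noteq> unit_cube"
    and nAB: "cube_face IA JA \<noteq> cube_face IB JB"
    and s1: "cube_face I1 J1 \<subseteq> cube_face IA JA" and s2: "cube_face I2 J2 \<subseteq> cube_face IB JB"
    and sA: "cube_face I J \<subseteq> cube_face IA JA" and sB: "cube_face I J \<subseteq> cube_face IB JB"
    and d1: "I1 \<inter> J1 = {}" "int (card (UNIV - (I1 \<union> J1))) = int CARD('n) - 2"
    and d: "I \<inter> J = {}" "int (card (UNIV - (I \<union> J))) = int CARD('n) - 2"
    and card3: "CARD('n) \<ge> 3"
    and eq: "lin_face (\<phi> (cube_face I1 J1)) = lin_face (\<phi> (cube_face I2 J2))"
  shows "lin_face (\<phi> (cube_face I J)) = lin_face (\<phi> (cube_face I1 J1))"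
proof -
  have ff: "\<And>I J. \<phi> (cube_face I J) face_of C" using iso_props(1)[OF iso] cube_face_face by blast
  have sub: "\<And>I J I' J'. cube_face I J \<subseteq> cube_face I' J' \<Longrightarrow> \<phi> (cube_face I J) \<subseteq> \<phi> (cube_face I' J')"
    using iso_props(2)[OF iso] cube_face_face by blast
  have inj: "\<And>I J I' J'. cube_face I J \<noteq> cube_face I' J' \<Longrightarrow> \<phi> (cube_face I J) \<noteq> \<phi> (cube_face I' J')"
    using iso_props(3)[OF iso] cube_face_face by blast
  have "C \<in> \<phi> ` {F. F face_of unit_cube}"
    using iso face_of_refl[OF C] unfolding face_poset_iso_def bij_betw_def by auto
  then obtain F0 where F0: "F0 face_of unit_cube" "\<phi> F0 = C" by auto
  have "\<phi> F0 \<subseteq> \<phi> unit_cube"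
    using iso_props(2)[OF iso] F0(1) face_of_refl[OF convex_box(1)[of 0 1]] face_of_imp_subset[OF F0(1)]
    by (metis cube_face_empty cube_face_face)
  moreover have "\<phi> unit_cube \<subseteq> C" using ff[of "{}" "{}"] face_of_imp_subset cube_face_empty by metis
  ultimately have "\<phi> unit_cube = C" using F0 by auto
  then have phiC: "\<phi> (cube_face {} {}) = C" by (simp add: cube_face_empty)
  have up: "aff_dim (\<phi> (cube_face I' J')) \<le> int CARD('n) - 1" if "cube_face I' J' \<noteq> unit_cube" for I' J'
  proof -
    have "\<phi> (cube_face I' J') \<noteq> C" using inj[of I' J' "{}" "{}"] that phiC cube_face_empty by metis
    then have "aff_dim (\<phi> (cube_face I' J')) < aff_dim C" using face_of_aff_dim_lt[OF C ff] by blast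
    then show ?thesis using dC by linarith
  qed
  have lo1: "aff_dim (\<phi> (cube_face I1 J1)) \<ge> int CARD('n) - 2"
    using dim_lower[OF iso d1(1) refl] d1(2) by simp
  have lo: "aff_dim (\<phi> (cube_face I J)) \<ge> int CARD('n) - 2"
    using dim_lower[OF iso d(1) refl] d(2) by simp
  have ne1: "\<phi> (cube_face I1 J1) \<noteq> {}" using lo1 card3 by auto
  have ne: "\<phi> (cube_face I J) \<noteq> {}" using lo card3 by auto
  show ?thesis
    by (rule key[OF C ff ff inj[OF nAB] up[OF nA] up[OF nB] sub[OF s1] ne1 lo1 sub[OF s2]
          sub[OF sA] sub[OF sB] ne lo eq])
qed


theorem corollary3p4:
  fixes C :: "(real^'n) set" and \<phi> :: "(real^'n) set \<Rightarrow> (real^'n) set" and x y :: 'n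
  assumes "CARD('n) \<ge> 3"
    and "smooth_polytope C"
    and "combinatorial_cube C"
    and "face_poset_iso \<phi> C"
    and "x \<noteq> y"
  defines "Fxy \<equiv> \<phi> (cube_face {x, y} {})"
    and "Fxy' \<equiv> \<phi> (cube_face {x} {y})"
    and "Fx'y \<equiv> \<phi> (cube_face {y} {x})"
    and "Fx'y' \<equiv> \<phi> (cube_face {} {x, y})"
  assumes "(parallel_faces Fxy' Fx'y \<and> parallel_faces Fxy' Fx'y' \<and> parallel_faces Fx'y Fx'y')
         \<or> (parallel_faces Fxy Fx'y \<and> parallel_faces Fxy Fx'y' \<and> parallel_faces Fx'y Fx'y')
         \<or> (parallel_faces Fxy Fxy' \<and> parallel_faces Fxy Fx'y' \<and> parallel_faces Fxy' Fx'y')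
         \<or> (parallel_faces Fxy Fxy' \<and> parallel_faces Fxy Fx'y \<and> parallel_faces Fxy' Fx'y)"
  shows "parallel_faces Fxy Fxy' \<and> parallel_faces Fxy Fx'y \<and> parallel_faces Fxy Fx'y'
       \<and> parallel_faces Fxy' Fx'y \<and> parallel_faces Fxy' Fx'y' \<and> parallel_faces Fx'y Fx'y'"
proof -
  note iso = assms(4)
  have sp: "simple_polytope C" using assms(2) unfolding smooth_polytope_def by simp
  have Cc: "convex C" using sp unfolding simple_polytope_def using polytope_imp_convex by blast
  have dC: "aff_dim C = int CARD('n)" using sp unfolding simple_polytope_def by simp
  have xy: "x \<noteq> y" by fact
  have c3: "CARD('n) \<ge> 3" by fact
  have U: "unit_cube = cube_face {} {}" by (simp add: cube_face_empty)
  have nx': "cube_face {} {x} \<noteq> unit_cube" unfolding U by (rule not_sym, rule cf_neq[of "vtx {}"]) (auto simp: vtx_mem)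
  have ny': "cube_face {} {y} \<noteq> unit_cube" unfolding U by (rule not_sym, rule cf_neq[of "vtx {}"]) (auto simp: vtx_mem)
  have nx: "cube_face {x} {} \<noteq> unit_cube" unfolding U by (rule not_sym, rule cf_neq[of "vtx {x}"]) (auto simp: vtx_mem)
  have ny: "cube_face {y} {} \<noteq> unit_cube" unfolding U by (rule not_sym, rule cf_neq[of "vtx {y}"]) (auto simp: vtx_mem)
  have n1: "cube_face {} {x} \<noteq> cube_face {} {y}" by (rule cf_neq[of "vtx {x}"]) (use xy in \<open>auto simp: vtx_mem\<close>)
  have n2: "cube_face {x} {} \<noteq> cube_face {y} {}" by (rule cf_neq[of "vtx {y}"]) (use xy in \<open>auto simp: vtx_mem\<close>)
  have n3: "cube_face {x} {} \<noteq> cube_face {} {y}" by (rule cf_neq[of "vtx {}"]) (use xy in \<open>auto simp: vtx_mem\<close>)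
  have n4: "cube_face {} {x} \<noteq> cube_face {y} {}" by (rule not_sym, rule cf_neq[of "vtx {}"]) (use xy in \<open>auto simp: vtx_mem\<close>)
  have c_a: "int (card (UNIV - ({x, y} \<union> {}))) = int CARD('n) - 2" by (rule card2[OF xy]) auto
  have c_b: "int (card (UNIV - ({} \<union> {x, y}))) = int CARD('n) - 2" by (rule card2[OF xy]) auto
  have c_c: "int (card (UNIV - ({x} \<union> {y}))) = int CARD('n) - 2" by (rule card2[OF xy]) auto
  have c_d: "int (card (UNIV - ({y} \<union> {x}))) = int CARD('n) - 2" by (rule card2[OF xy]) auto
  have P: "lin_face Fx'y' = lin_face Fx'y \<and> lin_face Fxy = lin_face Fxy'" if h: "lin_face Fxy' = lin_face Fx'y"
  proof
    show "lin_face Fx'y' = lin_face Fx'y" unfolding Fx'y'_def Fx'y_def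
      by (rule key2[where ?I2.0="{x}" and ?J2.0="{y}", OF iso Cc dC nx' ny' n1 cube_face_mono cube_face_mono cube_face_mono cube_face_mono
           _ c_d _ c_b c3]) (use xy h in \<open>auto simp: Fxy'_def Fx'y_def\<close>)
    show "lin_face Fxy = lin_face Fxy'" unfolding Fxy_def Fxy'_def
      by (rule key2[where ?I2.0="{y}" and ?J2.0="{x}", OF iso Cc dC nx ny n2 cube_face_mono cube_face_mono cube_face_mono cube_face_mono
           _ c_c _ c_a c3]) (use xy h in \<open>auto simp: Fxy'_def Fx'y_def\<close>)
  qed
  have Q: "lin_face Fxy' = lin_face Fxy \<and> lin_face Fx'y = lin_face Fx'y'" if h: "lin_face Fxy = lin_face Fx'y'"
  proof
    show "lin_face Fxy' = lin_face Fxy" unfolding Fxy'_def Fxy_def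
      by (rule key2[where ?I2.0="{}" and ?J2.0="{x,y}", OF iso Cc dC nx ny' n3 cube_face_mono cube_face_mono cube_face_mono cube_face_mono
           _ c_a _ c_c c3]) (use xy h in \<open>auto simp: Fxy_def Fx'y'_def\<close>)
    show "lin_face Fx'y = lin_face Fx'y'" unfolding Fx'y_def Fx'y'_def
      by (rule key2[where ?I2.0="{x,y}" and ?J2.0="{}", OF iso Cc dC nx' ny n4 cube_face_mono cube_face_mono cube_face_mono cube_face_mono
           _ c_b _ c_d c3]) (use xy h in \<open>auto simp: Fxy_def Fx'y'_def\<close>)
  qed
  have "lin_face Fxy' = lin_face Fx'y \<or> lin_face Fxy = lin_face Fx'y'"
    using assms(10) unfolding parallel_faces_def by blast
  then show ?thesis using P Q unfolding parallel_faces_def by metis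
qed

end
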